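(* Let $\boldsymbol{M}$ be a weight sequence such that $\widetilde{\boldsymbol{M}}$ is almost increasing, and let $\boldsymbol{A}$ be either an almost increasing sequence, or a sequence such that $\liminf_{p\to\infty}A_p^{1/p}>0$ and $\widehat{\boldsymbol{A}}$ satisfies $\operatorname{(alg)}$. Then: (i) $\mathcal{F}\colon\mathcal{S}^{\{\widehat{\boldsymbol{A}}\}}_{\{\boldsymbol{M}\}}(\mathbb{R})\to\mathcal{S}^{\{\widetilde{\boldsymbol{M}}\}}_{\{\widehat{\boldsymbol{A}}\}}(\mathbb{R})$ is (well-defined and) continuous, and the same holds at the level of Banach spaces with a uniform scaling of $h$: there exists $a>0$ such that for every $h\ge1$, $\mathcal{F}$ maps $\mathcal{S}^{\widehat{\boldsymbol{A}},h}_{\boldsymbol{M},h}(\mathbb{R})$ continuously into $\mathcal{S}^{\widetilde{\boldsymbol{M}},ah}_{\widehat{\boldsymbol{A}},ah}(\mathbb{R})$. (ii) Statement (i) is also valid for $\mathcal{F}^{-1}$.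
   Context: Sequences are of positive reals indexed by $\mathbb{N}_0$; $m_p=M_{p+1}/M_p$. Weight sequence: $M_0=1$, $M_p^2\le M_{p-1}M_{p+1}$ ($p\ge1$), $m_p\to\infty$. $\widetilde{\boldsymbol{M}}=(\widetilde M_p)_p$ with $\widetilde M_p=M_{p+1}\log(e^2m_{p+1}/m_p)$. Almost increasing: $c_p\le ac_q$ for all $q\ge p$, some $a>0$. $\operatorname{(alg)}$ for $\boldsymbol{N}$: $N_pN_q\le C_1^{p+q}N_{p+q}$ for all $p,q$, some $C_1\ge1$. $\widehat{\boldsymbol{A}}=(p!A_p)_p$. For sequences $\boldsymbol{N},\boldsymbol{B}$ and $h>0$, $\mathcal{S}^{\boldsymbol{B},h}_{\boldsymbol{N},h}(\mathbb{R})$ is the Banach space of $\varphi\in C^\infty(\mathbb{R})$ with norm $\sup_{p,q}\sup_{x\in\mathbb{R}}|x^p\varphi^{(q)}(x)|/(h^{p+q}N_pB_q)$, and $\mathcal{S}^{\{\boldsymbol{B}\}}_{\{\boldsymbol{N}\}}(\mathbb{R})=\bigcup_h$ of these with inductive limit topology. $\mathcal{F}(\varphi)(\xi)=\int_{\mathbb{R}}\varphi(x)e^{ix\xi}\,dx$, $\mathcal{F}^{-1}(\varphi)(\xi)=\frac1{2\pi}\mathcal{F}(\varphi)(-\xi)$. *)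

theory Defs
  imports "HOL-Analysis.Analysis"
begin

definition quot_seq :: "(nat \<Rightarrow> real) \<Rightarrow> nat \<Rightarrow> real" where
  "quot_seq M p = M (Suc p) / M p"

definition weight_sequence :: "(nat \<Rightarrow> real) \<Rightarrow> bool" where
  "weight_sequence M \<longleftrightarrow> (\<forall>p. M p > 0) \<and> M 0 = 1 \<and>
     (\<forall>p\<ge>1. (M p)^2 \<le> M (p - 1) * M (p + 1)) \<and>
     filterlim (quot_seq M) at_top sequentially"

definition tilde_seq :: "(nat \<Rightarrow> real) \<Rightarrow> nat \<Rightarrow> real" where
  "tilde_seq M p = M (p + 1) * ln (exp 2 * quot_seq M (p + 1) / quot_seq M p)"

definition hat_seq :: "(nat \<Rightarrow> real) \<Rightarrow> nat \<Rightarrow> real" where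
  "hat_seq A p = fact p * A p"

definition almost_increasing :: "(nat \<Rightarrow> real) \<Rightarrow> bool" where
  "almost_increasing c \<longleftrightarrow> (\<exists>a>0. \<forall>p q. p \<le> q \<longrightarrow> c p \<le> a * c q)"

definition alg_cond :: "(nat \<Rightarrow> real) \<Rightarrow> bool" where
  "alg_cond N \<longleftrightarrow> (\<exists>C1\<ge>1. \<forall>p q. N p * N q \<le> C1 ^ (p + q) * N (p + q))"

fun iter_deriv :: "nat \<Rightarrow> (real \<Rightarrow> complex) \<Rightarrow> real \<Rightarrow> complex" where
  "iter_deriv 0 f = f"
| "iter_deriv (Suc n) f = (\<lambda>x. vector_derivative (iter_deriv n f) (at x))"

definition smooth_fun :: "(real \<Rightarrow> complex) \<Rightarrow> bool" where
  "smooth_fun f \<longleftrightarrow> (\<forall>n x. iter_deriv n f differentiable (at x))"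

definition S_vals :: "(nat \<Rightarrow> real) \<Rightarrow> (nat \<Rightarrow> real) \<Rightarrow> real \<Rightarrow> (real \<Rightarrow> complex) \<Rightarrow> real set" where
  "S_vals N B h \<phi> = {norm (complex_of_real (x ^ p) * iter_deriv q \<phi> x) / (h ^ (p + q) * N p * B q)
                     | p q x. True}"

text \<open>Membership in the Banach space S^{B,h}_{N,h}(R).\<close>
definition in_S :: "(nat \<Rightarrow> real) \<Rightarrow> (nat \<Rightarrow> real) \<Rightarrow> real \<Rightarrow> (real \<Rightarrow> complex) \<Rightarrow> bool" where
  "in_S N B h \<phi> \<longleftrightarrow> smooth_fun \<phi> \<and> bdd_above (S_vals N B h \<phi>)"

definition S_norm :: "(nat \<Rightarrow> real) \<Rightarrow> (nat \<Rightarrow> real) \<Rightarrow> real \<Rightarrow> (real \<Rightarrow> complex) \<Rightarrow> real" where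
  "S_norm N B h \<phi> = Sup (S_vals N B h \<phi>)"

definition in_S_Roumieu :: "(nat \<Rightarrow> real) \<Rightarrow> (nat \<Rightarrow> real) \<Rightarrow> (real \<Rightarrow> complex) \<Rightarrow> bool" where
  "in_S_Roumieu N B \<phi> \<longleftrightarrow> (\<exists>h>0. in_S N B h \<phi>)"

definition fourier :: "(real \<Rightarrow> complex) \<Rightarrow> real \<Rightarrow> complex" where
  "fourier \<phi> \<xi> = integral\<^sup>L lborel (\<lambda>x. \<phi> x * cis (x * \<xi>))"

definition inv_fourier :: "(real \<Rightarrow> complex) \<Rightarrow> real \<Rightarrow> complex" where
  "inv_fourier \<phi> \<xi> = fourier \<phi> (- \<xi>) / complex_of_real (2 * pi)"

text \<open>The conclusion of (i) for an operator T:
  T maps S^{B1}_{N1} into S^{B2}_{N2}, and there is a>0 such that for every h>=1,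
  T maps S^{B1,h}_{N1,h} into S^{B2,ah}_{N2,ah} continuously (bounded linear maps
  between normed spaces: a norm estimate with a constant C depending on h).\<close>
definition maps_continuously ::
  "((real \<Rightarrow> complex) \<Rightarrow> real \<Rightarrow> complex) \<Rightarrow> (nat \<Rightarrow> real) \<Rightarrow> (nat \<Rightarrow> real)
    \<Rightarrow> (nat \<Rightarrow> real) \<Rightarrow> (nat \<Rightarrow> real) \<Rightarrow> bool" where
  "maps_continuously T N1 B1 N2 B2 \<longleftrightarrow>
     (\<forall>\<phi>. in_S_Roumieu N1 B1 \<phi> \<longrightarrow> in_S_Roumieu N2 B2 (T \<phi>)) \<and>
     (\<exists>a>0. \<forall>h\<ge>1. \<exists>C. \<forall>\<phi>. in_S N1 B1 h \<phi> \<longrightarrow>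
        in_S N2 B2 (a * h) (T \<phi>) \<and> S_norm N2 B2 (a * h) (T \<phi>) \<le> C * S_norm N1 B1 h \<phi>)"

end

theory Submission
  imports Defs "HOL-Probability.Characteristic_Functions" "HOL-Probability.Sinc_Integral" "HOL-Real_Asymp.Real_Asymp"
begin

declare iter_deriv.simps(2)[simp del]

lemma iter_deriv_seq:
  assumes g0: "g 0 = f" and gd: "\<And>n x. (g n has_vector_derivative g (Suc n) x) (at x)"
  shows "iter_deriv n f = g n"
proof (induction n)
  case 0 then show ?case using g0 by simp
next
  case (Suc n)
  show ?case using gd[of n] by (auto simp: Suc iter_deriv.simps(2) vector_derivative_at)
qed

lemma iter_deriv_seq_smooth:
  assumes g0: "g 0 = f" and gd: "\<And>n x. (g n has_vector_derivative g (Suc n) x) (at x)"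
  shows "smooth_fun f"
  unfolding smooth_fun_def iter_deriv_seq[OF assms]
  using gd differentiableI_vector by blast

lemma smooth_deriv:
  assumes "smooth_fun f"
  shows "(iter_deriv n f has_vector_derivative iter_deriv (Suc n) f x) (at x)"
  using assms unfolding smooth_fun_def by (simp add: vector_derivative_works iter_deriv.simps(2))

lemma smooth_cont:
  assumes "smooth_fun f"
  shows "continuous_on UNIV (iter_deriv n f)"
  by (meson assms continuous_at_imp_continuous_on differentiable_imp_continuous_within smooth_fun_def)

lemma smooth_isCont:
  assumes "smooth_fun f"
  shows "isCont (iter_deriv n f) x"
  by (meson assms differentiable_imp_continuous_within smooth_fun_def)

lemma smooth_meas:
  assumes "smooth_fun f"
  shows "iter_deriv n f \<in> borel_measurable borel"
  using smooth_cont[OF assms] borel_measurable_continuous_onI by blast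

definition xmul :: "(real \<Rightarrow> complex) \<Rightarrow> real \<Rightarrow> complex" where
  "xmul f = (\<lambda>x. complex_of_real x * f x)"

lemma ofreal_vd: "((\<lambda>x. complex_of_real x) has_vector_derivative 1) (at x)"
  using has_vector_derivative_of_real[OF DERIV_ident] by simp

lemma xmul_deriv_seq:
  assumes "smooth_fun f"
  shows "((\<lambda>x. complex_of_real x * iter_deriv n f x + of_nat n * iter_deriv (n - 1) f x)
          has_vector_derivative
          (complex_of_real x * iter_deriv (Suc n) f x + of_nat (Suc n) * iter_deriv (Suc n - 1) f x)) (at x)"
proof (cases n)
  case 0
  have "((\<lambda>x. complex_of_real x * iter_deriv 0 f x) has_vector_derivative
      (complex_of_real x * iter_deriv (Suc 0) f x + 1 * iter_deriv 0 f x)) (at x)"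
    by (intro has_vector_derivative_mult ofreal_vd smooth_deriv[OF assms])
  then show ?thesis using 0 by (simp add: algebra_simps)
next
  case (Suc m)
  have "((\<lambda>x. complex_of_real x * iter_deriv n f x + of_nat n * iter_deriv m f x) has_vector_derivative
      ((complex_of_real x * iter_deriv (Suc n) f x + 1 * iter_deriv n f x) + of_nat n * iter_deriv (Suc m) f x)) (at x)"
    by (intro has_vector_derivative_add has_vector_derivative_mult ofreal_vd
        smooth_deriv[OF assms] has_vector_derivative_mult_right)
  then show ?thesis using Suc by (simp add: algebra_simps)
qed

lemma xmul_iter:
  assumes "smooth_fun f"
  shows "iter_deriv n (xmul f) = (\<lambda>x. complex_of_real x * iter_deriv n f x + of_nat n * iter_deriv (n - 1) f x)"
  by (rule iter_deriv_seq[where g="\<lambda>n x. complex_of_real x * iter_deriv n f x + of_nat n * iter_deriv (n - 1) f x"])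
     (simp add: xmul_def, rule xmul_deriv_seq[OF assms])

lemma xmul_smooth:
  assumes "smooth_fun f"
  shows "smooth_fun (xmul f)"
  by (rule iter_deriv_seq_smooth[where g="\<lambda>n x. complex_of_real x * iter_deriv n f x + of_nat n * iter_deriv (n - 1) f x"])
     (simp add: xmul_def, rule xmul_deriv_seq[OF assms])

definition S0 :: "(real \<Rightarrow> complex) \<Rightarrow> bool" where
  "S0 f \<longleftrightarrow> smooth_fun f \<and> (\<forall>j k. \<exists>C. \<forall>x. \<bar>x\<bar>^j * norm (iter_deriv k f x) \<le> C)"

lemma S0_xmul:
  assumes "S0 f" shows "S0 (xmul f)"
proof -
  have sm: "smooth_fun f" using assms S0_def by blast
  have "\<exists>C. \<forall>x. \<bar>x\<bar>^j * norm (iter_deriv k (xmul f) x) \<le> C" for j k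
  proof -
    obtain C1 where C1: "\<And>x. \<bar>x\<bar>^(Suc j) * norm (iter_deriv k f x) \<le> C1" using assms S0_def by blast
    obtain C2 where C2: "\<And>x. \<bar>x\<bar>^j * norm (iter_deriv (k - 1) f x) \<le> C2" using assms S0_def by blast
    have "\<bar>x\<bar>^j * norm (iter_deriv k (xmul f) x) \<le> C1 + real k * C2" for x
    proof -
      have "\<bar>x\<bar>^j * norm (iter_deriv k (xmul f) x)
          \<le> \<bar>x\<bar>^j * (\<bar>x\<bar> * norm (iter_deriv k f x) + real k * norm (iter_deriv (k - 1) f x))"
        unfolding xmul_iter[OF sm]
        by (intro mult_left_mono) (auto intro!: order_trans[OF norm_triangle_ineq] simp: norm_mult)
      also have "\<dots> = \<bar>x\<bar>^(Suc j) * norm (iter_deriv k f x) + real k * (\<bar>x\<bar>^j * norm (iter_deriv (k - 1) f x))"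
        by (simp add: algebra_simps)
      also have "\<dots> \<le> C1 + real k * C2"
        by (intro add_mono C1 mult_left_mono C2) auto
      finally show ?thesis .
    qed
    then show ?thesis by blast
  qed
  then show ?thesis using xmul_smooth[OF sm] S0_def by blast
qed

definition xpow :: "nat \<Rightarrow> (real \<Rightarrow> complex) \<Rightarrow> real \<Rightarrow> complex" where
  "xpow q f = (\<lambda>x. complex_of_real (x ^ q) * f x)"

lemma xpow_Suc: "xpow (Suc q) f = xmul (xpow q f)"
  by (auto simp: xpow_def xmul_def)

lemma xpow_0: "xpow 0 f = f"
  by (auto simp: xpow_def)

lemma S0_xpow: "S0 f \<Longrightarrow> S0 (xpow q f)"
  by (induction q) (auto simp: xpow_0 xpow_Suc S0_xmul)

definition G :: "real \<Rightarrow> (real \<Rightarrow> complex) \<Rightarrow> real \<Rightarrow> complex" where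
  "G s f \<xi> = integral\<^sup>L lborel (\<lambda>x. f x * cis (s * x * \<xi>))"

lemma integrable_inv_sq: "integrable lborel (\<lambda>x::real. inverse (1 + x^2))"
  using integrable_inverse_1_plus_square unfolding set_integrable_def by simp

lemma cont_meas: "continuous_on UNIV g \<Longrightarrow> g \<in> borel_measurable borel"
  using borel_measurable_continuous_onI by simp

lemma integrable_decay:
  fixes f :: "real \<Rightarrow> 'a::{banach,second_countable_topology}"
  assumes "f \<in> borel_measurable borel" "\<And>x. norm (f x) \<le> C / (1 + x^2)"
  shows "integrable lborel f"
proof -
  have i: "integrable lborel (\<lambda>x::real. C * inverse (1 + x^2))" using integrable_mult_right[OF integrable_inv_sq] by simp
  have m: "f \<in> borel_measurable lborel" using assms(1) by simp
  have "norm (f x) \<le> norm (C * inverse (1+x^2))" for x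
  proof -
    have pos: "1 + x^2 > 0" by (simp add: add_pos_nonneg)
    have "0 \<le> norm (f x)" by simp
    also have "\<dots> \<le> C/(1+x^2)" by (rule assms(2))
    finally have "C \<ge> 0" using pos by (simp add: zero_le_divide_iff)
    then show "norm (f x) \<le> norm (C * inverse (1+x^2))" using assms(2)[of x] pos
      by (simp add: divide_inverse abs_mult)
  qed
  then have "AE x in lborel. norm (f x) \<le> norm (C * inverse (1+x^2))" by simp
  from Bochner_Integration.integrable_bound[OF i m this] show ?thesis .
qed

lemma S0_smooth: "S0 f \<Longrightarrow> smooth_fun f" by (simp add: S0_def)

lemma S0_decay:
  assumes "S0 f"
  shows "\<exists>C. \<forall>x. \<bar>x\<bar>^j * norm (iter_deriv k f x) \<le> C / (1 + x^2)"
proof -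
  obtain C0 where C0: "\<And>x. \<bar>x\<bar>^j * norm (iter_deriv k f x) \<le> C0" using assms S0_def by blast
  obtain C2 where C2: "\<And>x. \<bar>x\<bar>^(j+2) * norm (iter_deriv k f x) \<le> C2" using assms S0_def by blast
  have "\<bar>x\<bar>^j * norm (iter_deriv k f x) \<le> (C0 + C2) / (1 + x^2)" for x
  proof -
    have pos: "1 + x^2 > 0" by (simp add: add_pos_nonneg)
    have "(1 + x^2) * (\<bar>x\<bar>^j * norm (iter_deriv k f x)) = \<bar>x\<bar>^j * norm (iter_deriv k f x) + \<bar>x\<bar>^(j+2) * norm (iter_deriv k f x)"
      by (simp add: algebra_simps power_add power2_eq_square)
    also have "\<dots> \<le> C0 + C2" using C0 C2 by (intro add_mono)
    finally show ?thesis using pos by (simp add: le_divide_eq mult.commute)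
  qed
  then show ?thesis by blast
qed

lemma S0_integrable_bound:
  fixes g :: "real \<Rightarrow> 'a::{banach,second_countable_topology}"
  assumes "S0 f" "g \<in> borel_measurable borel" "\<And>x. norm (g x) \<le> \<bar>x\<bar>^j * norm (iter_deriv k f x)"
  shows "integrable lborel g"
proof -
  obtain C where C: "\<And>x. \<bar>x\<bar>^j * norm (iter_deriv k f x) \<le> C / (1 + x^2)" using S0_decay[OF assms(1)] by blast
  show ?thesis by (rule integrable_decay[OF assms(2)]) (rule order_trans[OF assms(3) C])
qed

lemma S0_cont: "S0 f \<Longrightarrow> continuous_on UNIV (iter_deriv k f)"
  using smooth_cont S0_smooth by blast

lemma S0_integrable_real:
  assumes "S0 f"
  shows "integrable lborel (\<lambda>x. \<bar>x\<bar>^j * norm (iter_deriv k f x))"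
  by (rule S0_integrable_bound[OF assms, of _ j k])
     (auto intro!: cont_meas continuous_intros S0_cont[OF assms])

lemma S0_integrable_cis:
  assumes "S0 f"
  shows "integrable lborel (\<lambda>x. iter_deriv k f x * cis (a * x))"
  by (rule S0_integrable_bound[OF assms, of _ 0 k])
     (auto intro!: cont_meas continuous_intros S0_cont[OF assms] simp: norm_mult)

lemma cis_approx: "cmod (cis a - 1 - \<i> * complex_of_real a) \<le> a^2 / 2"
proof -
  have "cmod (cis a - 1 - \<i> * complex_of_real a) = cmod (iexp a - (\<Sum>k \<le> 1. (\<i> * a)^k / fact k))"
    by (simp add: cis_conv_exp algebra_simps)
  also have "\<dots> \<le> \<bar>a\<bar>^2 / fact 2" using iexp_approx1[of a 1] by (simp add: numeral_2_eq_2)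
  finally show ?thesis by (simp add: power2_abs)
qed

lemma quad_deriv:
  fixes F :: "real \<Rightarrow> 'a::real_normed_vector"
  assumes "\<And>t. norm (F (x + t) - F x - t *\<^sub>R D) \<le> K * t^2"
  shows "(F has_vector_derivative D) (at x)"
  unfolding has_vector_derivative_def has_derivative_at_alt
proof (intro conjI allI impI)
  show "bounded_linear (\<lambda>t. t *\<^sub>R D)" by (rule bounded_linear_scaleR_left)
  fix e :: real assume e: "e > 0"
  show "\<exists>d>0. \<forall>y. norm (y - x) < d \<longrightarrow> norm (F y - F x - (y - x) *\<^sub>R D) \<le> e * norm (y - x)"
  proof (intro exI[of _ "e / (\<bar>K\<bar> + 1)"] conjI allI impI)
    show "e/(\<bar>K\<bar>+1) > 0" using e by simp
    fix y assume y: "norm (y - x) < e / (\<bar>K\<bar>+1)"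
    have "norm (F y - F x - (y-x) *\<^sub>R D) \<le> K * (y-x)^2" using assms[of "y-x"] by simp
    also have "\<dots> \<le> \<bar>K\<bar> * (y-x)^2" by (simp add: mult_right_mono)
    also have "\<dots> = (\<bar>K\<bar> * \<bar>y-x\<bar>) * \<bar>y-x\<bar>"
      by (simp add: power2_eq_square abs_mult_self_eq)
    also have "\<dots> \<le> e * \<bar>y-x\<bar>"
    proof (rule mult_right_mono)
      have "\<bar>K\<bar> * \<bar>y-x\<bar> \<le> (\<bar>K\<bar> + 1) * \<bar>y-x\<bar>" by (simp add: mult_right_mono)
      also have "\<dots> \<le> e" using y by (simp add: pos_less_divide_eq mult.commute less_imp_le)
      finally show "\<bar>K\<bar> * \<bar>y-x\<bar> \<le> e" .
    qed simp
    finally show "norm (F y - F x - (y - x) *\<^sub>R D) \<le> e * norm (y - x)" by simp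
  qed
qed

lemma G_deriv:
  assumes f: "S0 f"
  shows "(G s f has_vector_derivative (\<i> * s * G s (xmul f) \<xi>)) (at \<xi>)"
proof (rule quad_deriv)
  fix t :: real
  let ?K = "s^2 * t^2 / 2"
  have i1: "integrable lborel (\<lambda>x. f x * cis (s * x * (\<xi> + t)))"
    using S0_integrable_cis[OF f, of 0 "s * (\<xi> + t)"] by (simp add: ac_simps)
  have i2: "integrable lborel (\<lambda>x. f x * cis (s * x * \<xi>))"
    using S0_integrable_cis[OF f, of 0 "s * \<xi>"] by (simp add: ac_simps)
  have i3: "integrable lborel (\<lambda>x. xmul f x * cis (s * x * \<xi>))"
    using S0_integrable_cis[OF S0_xmul[OF f], of 0 "s * \<xi>"] by (simp add: ac_simps)
  have i4: "integrable lborel (\<lambda>x. ?K * (\<bar>x\<bar>^2 * norm (iter_deriv 0 f x)))"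
    using S0_integrable_real[OF f, of 2 0] by simp
  have feq: "(\<lambda>x. f x * cis (s * x * (\<xi> + t)) - f x * cis (s * x * \<xi>)
           - (t * \<i> * s) * (xmul f x * cis (s * x * \<xi>)))
     = (\<lambda>x. f x * cis (s * x * \<xi>) * (cis (s * x * t) - 1 - \<i> * complex_of_real (s * x * t)))"
    by (auto simp: xmul_def algebra_simps cis_mult[symmetric])
  have "G s f (\<xi> + t) - G s f \<xi> - t *\<^sub>R (\<i> * s * G s (xmul f) \<xi>)
      = integral\<^sup>L lborel (\<lambda>x. f x * cis (s * x * (\<xi> + t)) - f x * cis (s * x * \<xi>)
           - (t * \<i> * s) * (xmul f x * cis (s * x * \<xi>)))"
    using i1 i2 i3 by (simp add: G_def scaleR_conv_of_real algebra_simps)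
  also have "\<dots> = integral\<^sup>L lborel (\<lambda>x. f x * cis (s * x * \<xi>) * (cis (s * x * t) - 1 - \<i> * complex_of_real (s * x * t)))"
    by (simp only: feq)
  finally have eq: "G s f (\<xi> + t) - G s f \<xi> - t *\<^sub>R (\<i> * s * G s (xmul f) \<xi>) = \<dots>" .
  have "norm \<dots> \<le> integral\<^sup>L lborel (\<lambda>x. ?K * (\<bar>x\<bar>^2 * norm (iter_deriv 0 f x)))"
  proof (rule Bochner_Integration.integral_norm_bound_integral[OF _ i4])
    have "integrable lborel (\<lambda>x. f x * cis (s * x * (\<xi> + t)) - f x * cis (s * x * \<xi>)
           - (t * \<i> * s) * (xmul f x * cis (s * x * \<xi>)))"
      using i1 i2 i3 by (intro Bochner_Integration.integrable_diff integrable_mult_right)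
    then show "integrable lborel (\<lambda>x. f x * cis (s * x * \<xi>) * (cis (s * x * t) - 1 - \<i> * complex_of_real (s * x * t)))"
      by (simp only: feq)
    fix x
    have "norm (f x * cis (s * x * \<xi>) * (cis (s * x * t) - 1 - \<i> * complex_of_real (s * x * t)))
        = norm (f x) * norm (cis (s * x * t) - 1 - \<i> * complex_of_real (s * x * t))"
      by (simp add: norm_mult)
    also have "\<dots> \<le> norm (f x) * ((s * x * t)^2 / 2)"
      by (intro mult_left_mono cis_approx) simp
    also have "\<dots> = ?K * (\<bar>x\<bar>^2 * norm (iter_deriv 0 f x))"
      by (simp add: power_mult_distrib algebra_simps)
    finally show "norm (f x * cis (s * x * \<xi>) * (cis (s * x * t) - 1 - \<i> * complex_of_real (s * x * t)))
        \<le> ?K * (\<bar>x\<bar>^2 * norm (iter_deriv 0 f x))" .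
  qed
  also have "\<dots> = (s^2 / 2 * integral\<^sup>L lborel (\<lambda>x. \<bar>x\<bar>^2 * norm (iter_deriv 0 f x))) * t^2"
    by simp
  finally show "norm (G s f (\<xi> + t) - G s f \<xi> - t *\<^sub>R (\<i> * s * G s (xmul f) \<xi>))
      \<le> (s^2 / 2 * integral\<^sup>L lborel (\<lambda>x. \<bar>x\<bar>^2 * norm (iter_deriv 0 f x))) * t^2"
    using eq by simp
qed

lemma G_iter:
  assumes f: "S0 f"
  shows "iter_deriv q (G s f) = (\<lambda>\<xi>. (\<i> * s)^q * G s (xpow q f) \<xi>)"
proof (rule iter_deriv_seq)
  show "(\<lambda>\<xi>. (\<i> * s)^0 * G s (xpow 0 f) \<xi>) = G s f" by (simp add: xpow_0)
  fix n x
  show "((\<lambda>\<xi>. (\<i> * s)^n * G s (xpow n f) \<xi>) has_vector_derivative (\<i> * s)^(Suc n) * G s (xpow (Suc n) f) x) (at x)"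
    by (rule has_vector_derivative_eq_rhs[OF has_vector_derivative_mult_right[OF G_deriv[OF S0_xpow[OF f]]]])
       (simp add: xpow_Suc)
qed

lemma G_smooth:
  assumes f: "S0 f"
  shows "smooth_fun (G s f)"
proof (rule iter_deriv_seq_smooth)
  show "(\<lambda>\<xi>. (\<i> * s)^0 * G s (xpow 0 f) \<xi>) = G s f" by (simp add: xpow_0)
  fix n x
  show "((\<lambda>\<xi>. (\<i> * s)^n * G s (xpow n f) \<xi>) has_vector_derivative (\<i> * s)^(Suc n) * G s (xpow (Suc n) f) x) (at x)"
    by (rule has_vector_derivative_eq_rhs[OF has_vector_derivative_mult_right[OF G_deriv[OF S0_xpow[OF f]]]])
       (simp add: xpow_Suc)
qed

lemma cis_lin_vd: "((\<lambda>x. cis (s * x * \<xi>)) has_vector_derivative (\<i> * s * \<xi> * cis (s * x * \<xi>))) (at x)"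
  unfolding has_vector_derivative_def
  by (rule has_derivative_eq_rhs[OF has_derivative_cis[of "\<lambda>x. s * x * \<xi>" "\<lambda>t. s * t * \<xi>"]])
     (auto intro!: derivative_eq_intros simp: fun_eq_iff scaleR_conv_of_real)

lemma G_ibp:
  assumes d: "\<And>x. (\<psi> has_vector_derivative \<psi>' x) (at x)" and c: "continuous_on UNIV \<psi>'"
    and i1: "integrable lborel \<psi>" and i2: "integrable lborel \<psi>'"
    and l1: "(\<psi> \<longlongrightarrow> 0) at_top" and l2: "(\<psi> \<longlongrightarrow> 0) at_bot"
    and m1: "\<psi> \<in> borel_measurable borel" and m2: "\<psi>' \<in> borel_measurable borel"
  shows "G s \<psi>' \<xi> = - (\<i> * s * \<xi>) * G s \<psi> \<xi>"
proof -
  let ?F = "\<lambda>x. \<psi> x * cis (s * x * \<xi>)"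
  let ?f = "\<lambda>x. \<psi> x * (\<i> * s * \<xi> * cis (s * x * \<xi>)) + \<psi>' x * cis (s * x * \<xi>)"
  have dF: "(?F has_vector_derivative ?f x) (at x)" for x
    using has_vector_derivative_mult[OF d cis_lin_vd] by simp
  have cpsi: "continuous_on UNIV \<psi>"
    using d has_vector_derivative_continuous continuous_at_imp_continuous_on by blast
  have cf: "isCont ?f x" for x
  proof -
    have "continuous_on UNIV ?f" by (intro continuous_intros cpsi c)
    then show ?thesis by (simp add: continuous_on_eq_continuous_at)
  qed
  have j1: "integrable lborel (\<lambda>x. \<psi> x * cis (s * x * \<xi>))"
    by (rule Bochner_Integration.integrable_bound[OF integrable_norm[OF i1]])
       (auto intro!: cont_meas continuous_intros cpsi simp: norm_mult)
  have j2: "integrable lborel (\<lambda>x. \<psi>' x * cis (s * x * \<xi>))"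
    by (rule Bochner_Integration.integrable_bound[OF integrable_norm[OF i2]])
       (auto intro!: cont_meas continuous_intros c simp: norm_mult)
  have j1': "integrable lborel (\<lambda>x. (\<i> * s * \<xi>) * (\<psi> x * cis (s * x * \<xi>)))"
    using integrable_mult_right[OF j1] .
  have fi: "integrable lborel ?f"
    using Bochner_Integration.integrable_add[OF j1' j2] by (simp add: algebra_simps)
  have lim: "(?F \<longlongrightarrow> 0) F" if "(\<psi> \<longlongrightarrow> 0) F" for F
  proof (rule Lim_null_comparison[where g="\<lambda>x. norm (\<psi> x)"])
    show "eventually (\<lambda>x. norm (?F x) \<le> norm (\<psi> x)) F" by (simp add: norm_mult)
    show "((\<lambda>x. norm (\<psi> x)) \<longlongrightarrow> 0) F" using that tendsto_norm_zero by blast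
  qed
  have "(LBINT x=-\<infinity>..\<infinity>. ?f x) = 0 - 0"
  proof (rule interval_integral_FTC_integrable[where F="?F"])
    show "set_integrable lborel (einterval (-\<infinity>) \<infinity>) ?f"
      using fi by (simp add: set_integrable_def)
    show "((?F \<circ> real_of_ereal) \<longlongrightarrow> 0) (at_right (-\<infinity>))"
      unfolding ereal_tendsto_simps1 using lim[OF l2] .
    show "((?F \<circ> real_of_ereal) \<longlongrightarrow> 0) (at_left \<infinity>)"
      unfolding ereal_tendsto_simps1 using lim[OF l1] .
  qed (auto intro: dF cf)
  then have "integral\<^sup>L lborel ?f = 0"
    by (simp add: interval_lebesgue_integral_def set_lebesgue_integral_def)
  moreover have "integral\<^sup>L lborel ?f = (\<i> * s * \<xi>) * G s \<psi> \<xi> + G s \<psi>' \<xi>"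
  proof -
    have "integral\<^sup>L lborel ?f = integral\<^sup>L lborel (\<lambda>x. (\<i> * s * \<xi>) * (\<psi> x * cis (s * x * \<xi>)) + \<psi>' x * cis (s * x * \<xi>))"
      by (simp add: algebra_simps)
    also have "\<dots> = (\<i> * s * \<xi>) * G s \<psi> \<xi> + G s \<psi>' \<xi>"
      using j1' j2 j1 by (simp add: G_def)
    finally show ?thesis .
  qed
  ultimately show ?thesis by (simp add: algebra_simps eq_neg_iff_add_eq_0)
qed

lemma decay_lim_top: "((\<lambda>x::real. C / (1 + x^2)) \<longlongrightarrow> 0) at_top"
  by real_asymp

lemma decay_lim_bot: "((\<lambda>x::real. C / (1 + x^2)) \<longlongrightarrow> 0) at_bot"
  by real_asymp

lemma S0_lim:
  assumes "S0 f"
  shows "(iter_deriv k f \<longlongrightarrow> 0) at_top" "(iter_deriv k f \<longlongrightarrow> 0) at_bot"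
proof -
  obtain C where C: "\<And>x. \<bar>x\<bar>^0 * norm (iter_deriv k f x) \<le> C / (1 + x^2)" using S0_decay[OF assms] by blast
  show "(iter_deriv k f \<longlongrightarrow> 0) at_top"
    by (rule Lim_null_comparison[OF _ decay_lim_top[of C]]) (use C in simp)
  show "(iter_deriv k f \<longlongrightarrow> 0) at_bot"
    by (rule Lim_null_comparison[OF _ decay_lim_bot[of C]]) (use C in simp)
qed

lemma S0_integrable_k:
  assumes "S0 f"
  shows "integrable lborel (iter_deriv k f)"
  by (rule S0_integrable_bound[OF assms, of _ 0 k])
     (auto intro!: cont_meas S0_cont[OF assms])

lemma G_xi_pow:
  assumes f: "S0 f" and s: "\<bar>s\<bar> = 1"
  shows "\<bar>\<xi>\<bar>^p * norm (G s f \<xi>) = norm (G s (iter_deriv p f) \<xi>)"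
proof (induction p)
  case 0 then show ?case by simp
next
  case (Suc p)
  have "G s (iter_deriv (Suc p) f) \<xi> = - (\<i> * s * \<xi>) * G s (iter_deriv p f) \<xi>"
  proof (rule G_ibp)
    show "(iter_deriv p f has_vector_derivative iter_deriv (Suc p) f x) (at x)" for x
      using smooth_deriv[OF S0_smooth[OF f]] .
  qed (auto intro!: S0_cont[OF f] S0_integrable_k[OF f] S0_lim[OF f] cont_meas)
  then have "norm (G s (iter_deriv (Suc p) f) \<xi>) = \<bar>\<xi>\<bar> * norm (G s (iter_deriv p f) \<xi>)"
    using s by (simp add: norm_mult abs_mult)
  then show ?case using Suc.IH by simp
qed

lemma G_norm_le:
  assumes "S0 f"
  shows "norm (G s (iter_deriv p f) \<xi>) \<le> integral\<^sup>L lborel (\<lambda>x. \<bar>x\<bar>^0 * norm (iter_deriv p f x))"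
proof -
  have a: "integrable lborel (\<lambda>x. iter_deriv p f x * cis (s * x * \<xi>))"
    using S0_integrable_cis[OF assms, of p "s*\<xi>"] by (simp add: ac_simps)
  have b: "integrable lborel (\<lambda>x. \<bar>x\<bar>^0 * norm (iter_deriv p f x))"
    using S0_integrable_real[OF assms, of 0 p] .
  show ?thesis unfolding G_def
    by (rule Bochner_Integration.integral_norm_bound_integral[OF a b]) (simp add: norm_mult)
qed

lemma nn_piece_ln:
  assumes "0 < R0" "R0 \<le> R1" "0 \<le> Y1"
  shows "(\<integral>\<^sup>+x. ennreal (Y1 / x) * indicator {R0..R1} x \<partial>lborel) = ennreal (Y1 * ln R1 - Y1 * ln R0)"
proof -
  have c: "continuous_on {R0..R1} (\<lambda>x. Y1 / x)"
    using assms by (intro continuous_intros) auto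
  have si: "set_integrable lborel {R0..R1} (\<lambda>x. Y1 / x)"
    by (rule borel_integrable_atLeastAtMost'[OF c])
  have ftc: "integral\<^sup>L lborel (\<lambda>x. indicator {R0..R1} x *\<^sub>R (Y1 / x)) = Y1 * ln R1 - Y1 * ln R0"
  proof (rule integral_FTC_atLeastAtMost[OF assms(2) _ c])
    fix x assume "R0 \<le> x" "x \<le> R1"
    then have "x > 0" using assms by simp
    then show "((\<lambda>x. Y1 * ln x) has_vector_derivative Y1 / x) (at x within {R0..R1})"
      by (auto intro!: derivative_eq_intros simp: has_real_derivative_iff_has_vector_derivative[symmetric] field_simps)
  qed
  have "(\<integral>\<^sup>+x. ennreal (Y1 / x) * indicator {R0..R1} x \<partial>lborel)
      = (\<integral>\<^sup>+x. ennreal (indicator {R0..R1} x *\<^sub>R (Y1 / x)) \<partial>lborel)"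
    by (rule nn_integral_cong) (auto split: split_indicator)
  also have "\<dots> = ennreal (integral\<^sup>L lborel (\<lambda>x. indicator {R0..R1} x *\<^sub>R (Y1 / x)))"
  proof (rule nn_integral_eq_integral)
    show "integrable lborel (\<lambda>x. indicator {R0..R1} x *\<^sub>R (Y1 / x))" using si by (simp add: set_integrable_def)
    show "AE x in lborel. 0 \<le> indicator {R0..R1} x *\<^sub>R (Y1 / x)"
      using assms by (intro AE_I2) (auto split: split_indicator)
  qed
  finally show ?thesis using ftc by simp
qed

lemma nn_piece_sq:
  assumes "0 < R1" "0 \<le> Y2"
  shows "(\<integral>\<^sup>+x. ennreal (Y2 / x^2) * indicator {R1..} x \<partial>lborel) = ennreal (Y2 / R1)"
proof -
  have "(\<integral>\<^sup>+x. ennreal (Y2 / x^2) * indicator {R1..} x \<partial>lborel) = ennreal (0 - (- Y2 / R1))"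
  proof (rule nn_integral_FTC_atLeast[where F="\<lambda>x. - Y2 / x"])
    show "(\<lambda>x::real. Y2 / x^2) \<in> borel_measurable borel" by measurable
    fix x assume "R1 \<le> x"
    then have "x > 0" using assms by simp
    then show "((\<lambda>x. - Y2 / x) has_real_derivative Y2 / x^2) (at x)"
      by (auto intro!: derivative_eq_intros simp: field_simps power2_eq_square)
    show "0 \<le> Y2 / x^2" using assms by simp
  next
    show "((\<lambda>x::real. - Y2 / x) \<longlongrightarrow> 0) at_top" by real_asymp
  qed
  then show ?thesis by simp
qed

lemma e1: "(x::ennreal) \<le> x + y + z" by (intro add_increasing2) auto
lemma e2: "(y::ennreal) \<le> x + y + z" by (intro add_increasing2 add_increasing) auto
lemma e3: "(z::ennreal) \<le> x + y + z" by (intro add_increasing) auto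

lemma int_est:
  fixes u :: "real \<Rightarrow> real"
  assumes um: "u \<in> borel_measurable borel" and ui: "integrable lborel u"
    and u0: "\<And>x. 0 \<le> u x"
    and b0: "\<And>x. u x \<le> Y0" and b1: "\<And>x. \<bar>x\<bar> * u x \<le> Y1" and b2: "\<And>x. x^2 * u x \<le> Y2"
    and R: "0 < R0" "R0 \<le> R1"
  shows "integral\<^sup>L lborel u \<le> 2 * (Y0 * R0 + Y1 * ln (R1 / R0) + Y2 / R1)"
proof -
  have Y0: "0 \<le> Y0" using u0[of 0] b0[of 0] by simp
  have Y1: "0 \<le> Y1" using u0[of 0] b1[of 0] by simp
  have Y2: "0 \<le> Y2" using u0[of 0] b2[of 0] by simp
  have R1: "0 < R1" using R by simp
  define w where "w x = ennreal Y0 * indicator {0..R0} x + ennreal (Y1 / x) * indicator {R0..R1} x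
      + ennreal (Y2 / x^2) * indicator {R1..} x" for x :: real
  have wm: "w \<in> borel_measurable borel" unfolding w_def by measurable
  define T where "T = Y0 * R0 + (Y1 * ln R1 - Y1 * ln R0) + Y2 / R1"
  have lnle: "Y1 * ln R0 \<le> Y1 * ln R1" using R Y1 by (intro mult_left_mono) auto
  have T0: "0 \<le> T" unfolding T_def using R Y0 Y2 lnle by simp
  have wm2: "(\<lambda>x. w (- x)) \<in> borel_measurable borel" using wm by measurable
  have pt: "ennreal (u x) \<le> w x + w (- x)" for x
  proof -
    define a where "a = \<bar>x\<bar>"
    have a0: "0 \<le> a" by (simp add: a_def)
    have "ennreal (u x) \<le> w a"
    proof (cases "a \<le> R0")
      case True
      then have "ennreal (u x) \<le> ennreal Y0 * indicator {0..R0} a" using a0 b0[of x] by (simp add: ennreal_leI)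
      then show ?thesis unfolding w_def using e1 by (rule order_trans)
    next
      case False
      show ?thesis
      proof (cases "a \<le> R1")
        case True
        have "a * u x \<le> Y1" using b1[of x] by (simp add: a_def)
        then have "u x \<le> Y1 / a" using False R by (simp add: field_simps)
        then have "ennreal (u x) \<le> ennreal (Y1 / a) * indicator {R0..R1} a" using True False by (simp add: ennreal_leI)
        then show ?thesis unfolding w_def using e2 by (rule order_trans)
      next
        case False2: False
        have "a^2 * u x \<le> Y2" using b2[of x] by (simp add: a_def)
        then have "u x \<le> Y2 / a^2" using False R by (simp add: field_simps)
        then have "ennreal (u x) \<le> ennreal (Y2 / a^2) * indicator {R1..} a" using False2 by (simp add: ennreal_leI)
        then show ?thesis unfolding w_def using e3 by (rule order_trans)
      qed
    qed
    also have "w a \<le> w x + w (- x)"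
    proof (cases "x \<ge> 0")
      case True then show ?thesis unfolding a_def by (simp add: add_increasing2)
    next
      case False then have "\<bar>x\<bar> = - x" by simp
      then show ?thesis unfolding a_def by (simp add: add_increasing)
    qed
    finally show ?thesis .
  qed
  have "ennreal (integral\<^sup>L lborel u) = (\<integral>\<^sup>+x. ennreal (u x) \<partial>lborel)"
    by (rule nn_integral_eq_integral[symmetric, OF ui]) (simp add: u0)
  also have "\<dots> \<le> (\<integral>\<^sup>+x. w x + w (- x) \<partial>lborel)"
    by (rule nn_integral_mono) (rule pt)
  also have "\<dots> = (\<integral>\<^sup>+x. w x \<partial>lborel) + (\<integral>\<^sup>+x. w (- x) \<partial>lborel)"
    using wm wm2 by (simp add: nn_integral_add)
  also have "(\<integral>\<^sup>+x. w (- x) \<partial>lborel) = (\<integral>\<^sup>+x. w x \<partial>lborel)"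
    using nn_integral_real_affine[OF wm, of "-1" 0] by simp
  also have "(\<integral>\<^sup>+x. w x \<partial>lborel) = ennreal T"
  proof -
    have ma: "(\<lambda>x. ennreal Y0 * indicator {0..R0} x) \<in> borel_measurable borel" by measurable
    have mb: "(\<lambda>x. ennreal (Y1 / x) * indicator {R0..R1} x) \<in> borel_measurable borel" by measurable
    have mc: "(\<lambda>x. ennreal (Y2 / x^2) * indicator {R1..} x) \<in> borel_measurable borel" by measurable
    have mab: "(\<lambda>x. ennreal Y0 * indicator {0..R0} x + ennreal (Y1 / x) * indicator {R0..R1} x) \<in> borel_measurable borel"
      by measurable
    have "(\<integral>\<^sup>+x. w x \<partial>lborel) = (\<integral>\<^sup>+x. ennreal Y0 * indicator {0..R0} x + ennreal (Y1 / x) * indicator {R0..R1} x \<partial>lborel)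
        + (\<integral>\<^sup>+x. ennreal (Y2 / x^2) * indicator {R1..} x \<partial>lborel)"
      unfolding w_def by (rule nn_integral_add) (simp_all only: measurable_lborel2 mab mc)
    also have "(\<integral>\<^sup>+x. ennreal Y0 * indicator {0..R0} x + ennreal (Y1 / x) * indicator {R0..R1} x \<partial>lborel)
        = (\<integral>\<^sup>+x. ennreal Y0 * indicator {0..R0} x \<partial>lborel) + (\<integral>\<^sup>+x. ennreal (Y1 / x) * indicator {R0..R1} x \<partial>lborel)"
      by (rule nn_integral_add) (simp_all only: measurable_lborel2 ma mb)
    also have p1: "(\<integral>\<^sup>+x. ennreal Y0 * indicator {0..R0} x \<partial>lborel) = ennreal (Y0 * R0)"
      using R Y0 by (simp add: nn_integral_cmult_indicator ennreal_mult)
    also note nn_piece_ln[OF R Y1]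
    also note nn_piece_sq[OF R1 Y2]
    also have "ennreal (Y0 * R0) + ennreal (Y1 * ln R1 - Y1 * ln R0) + ennreal (Y2 / R1) = ennreal T"
    proof -
      have "ennreal T = ennreal (Y0 * R0 + (Y1 * ln R1 - Y1 * ln R0)) + ennreal (Y2 / R1)"
        unfolding T_def by (rule ennreal_plus) (use R Y0 Y2 lnle in simp_all)
      also have "ennreal (Y0 * R0 + (Y1 * ln R1 - Y1 * ln R0)) = ennreal (Y0 * R0) + ennreal (Y1 * ln R1 - Y1 * ln R0)"
        by (rule ennreal_plus) (use R Y0 Y2 lnle in simp_all)
      finally show ?thesis by simp
    qed
    finally show ?thesis .
  qed
  finally have "ennreal (integral\<^sup>L lborel u) \<le> ennreal T + ennreal T" .
  also have "ennreal T + ennreal T = ennreal (2 * T)"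
    using ennreal_plus[OF T0 T0] by (simp only: mult_2)
  finally have "integral\<^sup>L lborel u \<le> 2 * T"
    using T0 by (subst (asm) ennreal_le_iff) auto
  also have "Y1 * ln R1 - Y1 * ln R0 = Y1 * ln (R1 / R0)" using R by (simp add: ln_div algebra_simps)
  then have "2 * T = 2 * (Y0 * R0 + Y1 * ln (R1 / R0) + Y2 / R1)" unfolding T_def by simp
  finally show ?thesis .
qed

lemma ws_pos: "weight_sequence M \<Longrightarrow> M p > 0"
  by (simp add: weight_sequence_def)

lemma ws_quot_pos: "weight_sequence M \<Longrightarrow> quot_seq M p > 0"
  by (simp add: quot_seq_def ws_pos)

lemma ws_quot_mono: assumes "weight_sequence M" shows "quot_seq M j \<le> quot_seq M (Suc j)"
proof -
  have "(M (Suc j))^2 \<le> M j * M (Suc (Suc j))"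
    using assms unfolding weight_sequence_def by (metis Suc_eq_plus1 diff_Suc_1 le_add2 plus_1_eq_Suc)
  then show ?thesis using ws_pos[OF assms, of j] ws_pos[OF assms, of "Suc j"]
  proof -
    have p0: "M j > 0" "M (Suc j) > 0" using ws_pos[OF assms] by auto
    have "M (Suc j) * M (Suc j) \<le> M (Suc (Suc j)) * M j"
      using \<open>(M (Suc j))^2 \<le> _\<close> by (simp add: power2_eq_square mult.commute)
    then show ?thesis unfolding quot_seq_def using p0
      by (simp add: divide_le_eq le_divide_eq mult.commute)
  qed
qed

lemma tilde_eq:
  assumes "weight_sequence M"
  shows "tilde_seq M j = M (Suc j) * (2 + ln (quot_seq M (Suc j) / quot_seq M j))"
proof -
  have "ln (exp 2 * quot_seq M (j + 1) / quot_seq M j) = 2 + ln (quot_seq M (Suc j) / quot_seq M j)"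
    using ws_quot_pos[OF assms, of j] ws_quot_pos[OF assms, of "Suc j"]
    by (simp add: ln_mult ln_div)
  then show ?thesis by (simp add: tilde_seq_def)
qed

lemma tilde_pos:
  assumes "weight_sequence M"
  shows "tilde_seq M j > 0"
proof -
  have "1 \<le> quot_seq M (Suc j) / quot_seq M j"
    using ws_quot_mono[OF assms, of j] ws_quot_pos[OF assms, of j] by simp
  then have "0 \<le> ln (quot_seq M (Suc j) / quot_seq M j)" by simp
  then show ?thesis using tilde_eq[OF assms, of j] ws_pos[OF assms, of "Suc j"] by simp
qed

definition maxseq :: "(nat \<Rightarrow> real) \<Rightarrow> nat \<Rightarrow> real" where
  "maxseq c p = Max (c ` {..p})"

lemma maxseq_ge: "i \<le> p \<Longrightarrow> c i \<le> maxseq c p"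
  unfolding maxseq_def by (intro Max_ge) auto

lemma maxseq_mono: "p \<le> p' \<Longrightarrow> maxseq c p \<le> maxseq c p'"
  unfolding maxseq_def by (intro Max_mono) auto

lemma maxseq_le: "(\<And>i. i \<le> p \<Longrightarrow> c i \<le> B) \<Longrightarrow> maxseq c p \<le> B"
  unfolding maxseq_def by (subst Max_le_iff) auto

lemma maxseq_pos: "(\<And>i. c i > 0) \<Longrightarrow> maxseq c p > 0"
  using maxseq_ge[of p p c] by (metis order_less_le_trans order_refl)

lemma maxseq_ai:
  assumes "almost_increasing c"
  shows "\<exists>a>0. \<forall>p. maxseq c p \<le> a * c p"
  using assms unfolding almost_increasing_def by (meson maxseq_le)

lemma liminf_lower:
  assumes pos: "\<And>p. A p > 0" and lim: "liminf (\<lambda>p. ereal (root p (A p))) > 0"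
  shows "\<exists>e c. 0 < e \<and> 0 < c \<and> c \<le> 1 \<and> (\<forall>n. e * c^n \<le> A n)"
proof -
  obtain c0 where c0: "0 < ereal c0" "ereal c0 < liminf (\<lambda>p. ereal (root p (A p)))"
    using ereal_dense2[OF lim] by blast
  have "eventually (\<lambda>p. ereal c0 < ereal (root p (A p))) sequentially"
    using less_LiminfD[OF c0(2)] .
  then obtain P0 where P0: "\<And>p. p \<ge> P0 \<Longrightarrow> c0 < root p (A p)"
    by (auto simp: eventually_sequentially)
  define c where "c = min c0 1"
  have c: "0 < c" "c \<le> 1" "c \<le> c0" using c0 by (auto simp: c_def)
  define P1 where "P1 = max P0 1"
  have big: "c^n \<le> A n" if "n \<ge> P1" for n
  proof -
    have n: "n > 0" "n \<ge> P0" using that by (auto simp: P1_def)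
    have "c \<le> root n (A n)" using P0[OF n(2)] c by simp
    then have "c^n \<le> root n (A n) ^ n" using c by (intro power_mono) auto
    also have "\<dots> = A n" using n pos[of n] by (simp add: less_imp_le)
    finally show ?thesis .
  qed
  define d where "d = Min ((\<lambda>n. A n / c^n) ` {..P1})"
  have d: "d > 0" unfolding d_def using pos c by (subst Min_gr_iff) auto
  define e where "e = min d 1"
  have e: "e > 0" "e \<le> 1" "e \<le> d" using d by (auto simp: e_def)
  have "e * c^n \<le> A n" for n
  proof (cases "n \<le> P1")
    case True
    then have "d \<le> A n / c^n" unfolding d_def by (intro Min_le) auto
    then have "e \<le> A n / c^n" using e by simp
    then show ?thesis using c by (simp add: le_divide_eq)
  next
    case False
    then have "c^n \<le> A n" using big by simp
    moreover have "e * c^n \<le> c^n" using e c by (simp add: mult_left_le_one_le)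
    ultimately show ?thesis by simp
  qed
  then show ?thesis using e c by blast
qed

lemma alg_bound:
  assumes pos: "\<And>p. A p > 0" and lim: "liminf (\<lambda>p. ereal (root p (A p))) > 0"
    and alg: "alg_cond (hat_seq A)"
  shows "\<exists>D L. 0 < D \<and> 1 \<le> L \<and> (\<forall>p. maxseq A p \<le> D * L^p * A p)"
proof -
  obtain e c where ec: "0 < e" "0 < c" "c \<le> 1" "\<And>n. e * c^n \<le> A n"
    using liminf_lower[OF pos lim] by blast
  obtain C1 where C1: "C1 \<ge> 1" "\<And>p q. hat_seq A p * hat_seq A q \<le> C1 ^ (p + q) * hat_seq A (p + q)"
    using alg unfolding alg_cond_def by blast
  define L where "L = 2 * C1 / c"
  have L1: "1 \<le> L" using C1(1) ec by (simp add: L_def field_simps)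
  have "A i \<le> (1/e) * L^p * A p" if "i \<le> p" for i p
  proof -
    define k where "k = p - i"
    have pk: "p = k + i" using that by (simp add: k_def)
    have "fact k * A k * (fact i * A i) \<le> C1 ^ p * (fact p * A p)"
      using C1(2)[of k i] by (simp add: hat_seq_def pk)
    moreover have "real (fact p) = fact k * fact i * real (p choose k)"
    proof -
      have "fact k * fact (p - k) * (p choose k) = fact p" using binomial_fact_lemma[of k p] pk by simp
      then have "real (fact k * fact (p - k) * (p choose k)) = real (fact p)" by simp
      then show ?thesis using pk by (simp add: of_nat_mult)
    qed
    ultimately have "fact k * fact i * (A k * A i) \<le> C1 ^ p * (fact k * fact i * real (p choose k) * A p)"
      by (simp add: algebra_simps)
    then have "(fact k * fact i) * (A k * A i) \<le> (fact k * fact i) * (C1 ^ p * (real (p choose k) * A p))"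
      by (simp only: mult_ac)
    then have "A k * A i \<le> C1 ^ p * (real (p choose k) * A p)"
      by (rule mult_left_le_imp_le) simp
    also have "\<dots> \<le> C1 ^ p * (2 ^ p * A p)"
    proof -
      have "real (p choose k) \<le> 2 ^ p" using binomial_le_pow2[of p k] by (metis of_nat_le_iff of_nat_numeral of_nat_power)
      then show ?thesis using pos[of p] C1(1) by (intro mult_left_mono mult_right_mono) auto
    qed
    finally have i1: "A k * A i \<le> C1 ^ p * (2 ^ p * A p)" .
    have "e * c^p \<le> e * c^k" using ec pk by (intro mult_left_mono power_decreasing) auto
    also have "\<dots> \<le> A k" by (rule ec(4))
    finally have ek: "e * c^p \<le> A k" .
    have "e * c^p * A i \<le> A k * A i" using ek pos[of i] by (simp add: mult_right_mono)
    also have "\<dots> \<le> C1 ^ p * (2 ^ p * A p)" by (rule i1)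
    finally have "e * c^p * A i \<le> C1 ^ p * (2 ^ p * A p)" .
    then have "A i \<le> C1 ^ p * (2 ^ p * A p) / (e * c^p)" using ec by (simp add: le_divide_eq mult.commute)
    also have "\<dots> = (1/e) * L^p * A p"
    proof -
      have "L^p = 2^p * C1^p / c^p" by (simp add: L_def power_divide power_mult_distrib)
      then show ?thesis using ec by simp
    qed
    finally show ?thesis .
  qed
  then have "\<forall>p. maxseq A p \<le> (1/e) * L^p * A p" by (auto intro: maxseq_le)
  then show ?thesis using ec L1 by (intro exI[of _ "1/e"] exI[of _ L]) auto
qed

lemma A_bound:
  assumes pos: "\<And>p. A p > 0"
    and cond: "almost_increasing A \<or> (liminf (\<lambda>p. ereal (root p (A p))) > 0 \<and> alg_cond (hat_seq A))"
  shows "\<exists>D L. 0 < D \<and> 1 \<le> L \<and> (\<forall>p. maxseq A p \<le> D * L^p * A p)"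
proof (cases "almost_increasing A")
  case True
  then obtain a where "a > 0" "\<forall>p. maxseq A p \<le> a * A p" using maxseq_ai by blast
  then show ?thesis by (intro exI[of _ a] exI[of _ 1]) auto
next
  case False
  then show ?thesis using cond alg_bound[of A, OF pos] by blast
qed

lemma in_S_val:
  assumes "in_S N B h \<phi>"
  shows "norm (complex_of_real (x ^ p) * iter_deriv q \<phi> x) / (h ^ (p + q) * N p * B q) \<le> S_norm N B h \<phi>"
  unfolding S_norm_def
  by (rule cSup_upper) (use assms in \<open>auto simp: in_S_def S_vals_def\<close>)

lemma in_S_pt:
  assumes "in_S N B h \<phi>" "N p > 0" "B q > 0" "h > 0"
  shows "\<bar>x\<bar>^p * norm (iter_deriv q \<phi> x) \<le> S_norm N B h \<phi> * (h ^ (p + q) * N p * B q)"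
proof -
  have d: "h ^ (p + q) * N p * B q > 0" using assms by simp
  have "norm (complex_of_real (x ^ p) * iter_deriv q \<phi> x) = \<bar>x\<bar>^p * norm (iter_deriv q \<phi> x)"
    by (simp add: norm_mult power_abs norm_power)
  then show ?thesis using in_S_val[OF assms(1), of x p q] d by (simp add: divide_le_eq)
qed

lemma S_norm_nonneg:
  assumes "in_S N B h \<phi>" "N 0 > 0" "B 0 > 0" "h > 0"
  shows "0 \<le> S_norm N B h \<phi>"
proof -
  have "0 \<le> norm (complex_of_real (0 ^ 0) * iter_deriv 0 \<phi> 0) / (h ^ (0 + 0) * N 0 * B 0)"
    using assms by simp
  also have "\<dots> \<le> S_norm N B h \<phi>" by (rule in_S_val[OF assms(1)])
  finally show ?thesis .
qed

lemma in_S_S0: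
  assumes "in_S N B h \<phi>" "\<And>p. N p > 0" "\<And>q. B q > 0" "h > 0"
  shows "S0 \<phi>"
  unfolding S0_def using assms(1) in_S_pt[OF assms(1) assms(2) assms(3) assms(4)]
  by (auto simp: in_S_def)

lemma hat_pos: "(\<And>p. A p > 0) \<Longrightarrow> hat_seq A p > 0"
  by (simp add: hat_seq_def)

lemma J_base:
  assumes ws: "weight_sequence M" and Ap: "\<And>p. A p > 0" and h: "h \<ge> 1"
    and inS: "in_S M (hat_seq A) h \<phi>"
  shows "integral\<^sup>L lborel (\<lambda>x. \<bar>x\<bar>^j * norm (iter_deriv p \<phi> x))
     \<le> 2 * S_norm M (hat_seq A) h \<phi> * h^(j+p+1) * hat_seq A p * tilde_seq M j"
proof -
  define N where "N = S_norm M (hat_seq A) h \<phi>"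
  have h0: "h > 0" using h by simp
  have N0: "0 \<le> N" unfolding N_def
    by (rule S_norm_nonneg[OF inS]) (use ws_pos[OF ws] hat_pos[OF Ap] h0 in auto)
  have S0: "S0 \<phi>" by (rule in_S_S0[OF inS]) (use ws_pos[OF ws] hat_pos[OF Ap] h0 in auto)
  have pt: "\<bar>x\<bar>^i * norm (iter_deriv p \<phi> x) \<le> N * (h ^ (i + p) * M i * hat_seq A p)" for x i
    unfolding N_def by (rule in_S_pt[OF inS]) (use ws_pos[OF ws] hat_pos[OF Ap] h0 in auto)
  define Q where "Q = N * h^(j+p) * hat_seq A p"
  have Q0: "0 \<le> Q" unfolding Q_def using N0 h0 hat_pos[of A p, OF Ap] by simp
  define m0 where "m0 = quot_seq M j"
  define m1 where "m1 = quot_seq M (Suc j)"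
  have m0: "m0 > 0" "m0 = M (Suc j) / M j" unfolding m0_def using ws_quot_pos[OF ws] by (auto simp: quot_seq_def)
  have m1: "m1 > 0" "m1 = M (Suc (Suc j)) / M (Suc j)" unfolding m1_def using ws_quot_pos[OF ws] by (auto simp: quot_seq_def)
  have m01: "m0 \<le> m1" unfolding m0_def m1_def by (rule ws_quot_mono[OF ws])
  have Mp: "M j > 0" "M (Suc j) > 0" "M (Suc (Suc j)) > 0" using ws_pos[OF ws] by auto
  have est: "integral\<^sup>L lborel (\<lambda>x. \<bar>x\<bar>^j * norm (iter_deriv p \<phi> x))
      \<le> 2 * ((Q * M j) * (h * m0) + (Q * h * M (Suc j)) * ln ((h * m1) / (h * m0)) + (Q * h^2 * M (Suc (Suc j))) / (h * m1))"
  proof (rule int_est)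
    show "(\<lambda>x. \<bar>x\<bar>^j * norm (iter_deriv p \<phi> x)) \<in> borel_measurable borel"
      by (intro cont_meas continuous_intros S0_cont[OF S0])
    show "integrable lborel (\<lambda>x. \<bar>x\<bar>^j * norm (iter_deriv p \<phi> x))"
      by (rule S0_integrable_real[OF S0])
    fix x
    show "0 \<le> \<bar>x\<bar>^j * norm (iter_deriv p \<phi> x)" by simp
    show "\<bar>x\<bar>^j * norm (iter_deriv p \<phi> x) \<le> Q * M j"
    proof -
      have e: "N * (h ^ (j + p) * M j * hat_seq A p) = Q * M j" unfolding Q_def by (simp only: mult_ac)
      show ?thesis using pt[of x j] unfolding e .
    qed
    have "\<bar>x\<bar> * (\<bar>x\<bar>^j * norm (iter_deriv p \<phi> x)) = \<bar>x\<bar>^(Suc j) * norm (iter_deriv p \<phi> x)" by simp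
    also have "\<dots> \<le> N * (h ^ (Suc j + p) * M (Suc j) * hat_seq A p)" by (rule pt)
    also have "\<dots> = Q * h * M (Suc j)" unfolding Q_def by (simp only: add_Suc power_Suc mult_ac)
    finally show "\<bar>x\<bar> * (\<bar>x\<bar>^j * norm (iter_deriv p \<phi> x)) \<le> Q * h * M (Suc j)" .
    have "x^2 * (\<bar>x\<bar>^j * norm (iter_deriv p \<phi> x)) = \<bar>x\<bar>^(Suc (Suc j)) * norm (iter_deriv p \<phi> x)"
    proof -
      have e: "x^2 = \<bar>x\<bar>^2" by simp
      have f: "\<bar>x\<bar>^2 * \<bar>x\<bar>^j = \<bar>x\<bar>^(Suc (Suc j))" by (metis add_2_eq_Suc power_add)
      show ?thesis by (simp only: e f mult.assoc[symmetric])
    qed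
    also have "\<dots> \<le> N * (h ^ (Suc (Suc j) + p) * M (Suc (Suc j)) * hat_seq A p)" by (rule pt)
    also have "\<dots> = Q * h^2 * M (Suc (Suc j))"
    proof -
      have "h^(Suc (Suc j) + p) = h^2 * h^(j+p)" by (metis add_2_eq_Suc add.assoc power_add)
      then show ?thesis unfolding Q_def by (simp only: mult_ac)
    qed
    finally show "x^2 * (\<bar>x\<bar>^j * norm (iter_deriv p \<phi> x)) \<le> Q * h^2 * M (Suc (Suc j))" .
  next
    show "0 < h * m0" using h0 m0(1) by (rule mult_pos_pos)
    show "h * m0 \<le> h * m1" using h0 m01 by (intro mult_left_mono) auto
  qed
  also have "\<dots> = 2 * Q * h * tilde_seq M j"
  proof -
    have a: "(Q * M j) * (h * m0) = Q * h * M (Suc j)"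
    proof -
      have e: "M j * m0 = M (Suc j)" using m0(2) Mp by simp
      have "(Q * M j) * (h * m0) = Q * h * (M j * m0)" by (simp only: mult_ac)
      then show ?thesis by (simp only: e)
    qed
    have b: "(Q * h^2 * M (Suc (Suc j))) / (h * m1) = Q * h * M (Suc j)"
    proof -
      have e: "M (Suc j) * m1 = M (Suc (Suc j))" using m1(2) Mp by simp
      have "Q * h * M (Suc j) * (h * m1) = Q * (h * h) * (M (Suc j) * m1)" by (simp only: mult_ac)
      also have "\<dots> = Q * h^2 * M (Suc (Suc j))" by (simp only: e power2_eq_square)
      finally have "Q * h^2 * M (Suc (Suc j)) = Q * h * M (Suc j) * (h * m1)" by (rule sym)
      moreover have "h * m1 \<noteq> 0" using h0 m1(1) by simp
      ultimately show ?thesis by (simp add: divide_eq_eq)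
    qed
    have c: "ln ((h * m1) / (h * m0)) = ln (m1 / m0)" using h0 by simp
    have t: "tilde_seq M j = M (Suc j) * (2 + ln (m1 / m0))" unfolding m0_def m1_def by (rule tilde_eq[OF ws])
    show ?thesis unfolding a b c t by algebra
  qed
  also have "\<dots> = 2 * N * h^(j+p+1) * hat_seq A p * tilde_seq M j"
    unfolding Q_def by (simp only: power_add power_one_right mult_ac)
  finally show ?thesis unfolding N_def .
qed

lemma J_step:
  assumes g: "S0 g"
  shows "integral\<^sup>L lborel (\<lambda>x. \<bar>x\<bar>^j * norm (iter_deriv p (xmul g) x))
    \<le> integral\<^sup>L lborel (\<lambda>x. \<bar>x\<bar>^(Suc j) * norm (iter_deriv p g x))
      + real p * integral\<^sup>L lborel (\<lambda>x. \<bar>x\<bar>^j * norm (iter_deriv (p - 1) g x))"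
proof -
  have i1: "integrable lborel (\<lambda>x. \<bar>x\<bar>^(Suc j) * norm (iter_deriv p g x))" by (rule S0_integrable_real[OF g])
  have i2: "integrable lborel (\<lambda>x. real p * (\<bar>x\<bar>^j * norm (iter_deriv (p - 1) g x)))"
    by (intro integrable_mult_right S0_integrable_real[OF g])
  have "integral\<^sup>L lborel (\<lambda>x. \<bar>x\<bar>^j * norm (iter_deriv p (xmul g) x))
     \<le> integral\<^sup>L lborel (\<lambda>x. \<bar>x\<bar>^(Suc j) * norm (iter_deriv p g x) + real p * (\<bar>x\<bar>^j * norm (iter_deriv (p - 1) g x)))"
  proof (rule integral_mono)
    show "integrable lborel (\<lambda>x. \<bar>x\<bar>^j * norm (iter_deriv p (xmul g) x))"
      by (rule S0_integrable_real[OF S0_xmul[OF g]])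
    show "integrable lborel (\<lambda>x. \<bar>x\<bar>^(Suc j) * norm (iter_deriv p g x) + real p * (\<bar>x\<bar>^j * norm (iter_deriv (p - 1) g x)))"
      using i1 i2 by (rule Bochner_Integration.integrable_add)
    fix x
    have "norm (iter_deriv p (xmul g) x) \<le> \<bar>x\<bar> * norm (iter_deriv p g x) + real p * norm (iter_deriv (p - 1) g x)"
      unfolding xmul_iter[OF S0_smooth[OF g]]
      by (rule order_trans[OF norm_triangle_ineq]) (simp add: norm_mult)
    then have "\<bar>x\<bar>^j * norm (iter_deriv p (xmul g) x) \<le> \<bar>x\<bar>^j * (\<bar>x\<bar> * norm (iter_deriv p g x) + real p * norm (iter_deriv (p - 1) g x))"
      by (rule mult_left_mono) simp
    also have "\<dots> = \<bar>x\<bar>^(Suc j) * norm (iter_deriv p g x) + real p * (\<bar>x\<bar>^j * norm (iter_deriv (p - 1) g x))"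
      by (simp add: algebra_simps)
    finally show "\<bar>x\<bar>^j * norm (iter_deriv p (xmul g) x) \<le> \<bar>x\<bar>^(Suc j) * norm (iter_deriv p g x) + real p * (\<bar>x\<bar>^j * norm (iter_deriv (p - 1) g x))" .
  qed
  also have "\<dots> = integral\<^sup>L lborel (\<lambda>x. \<bar>x\<bar>^(Suc j) * norm (iter_deriv p g x))
      + real p * integral\<^sup>L lborel (\<lambda>x. \<bar>x\<bar>^j * norm (iter_deriv (p - 1) g x))"
    using i1 i2 by simp
  finally show ?thesis .
qed

lemma J_ind:
  assumes ws: "weight_sequence M" and Ap: "\<And>p. A p > 0" and h: "h \<ge> 1"
    and inS: "in_S M (hat_seq A) h \<phi>"
  shows "integral\<^sup>L lborel (\<lambda>x. \<bar>x\<bar>^j * norm (iter_deriv p (xpow q \<phi>) x))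
     \<le> 2 * S_norm M (hat_seq A) h \<phi> * h^(p+q+j+1) * fact p * 2^q * maxseq A p * maxseq (tilde_seq M) (j+q)"
proof (induction q arbitrary: p j)
  define N where "N = S_norm M (hat_seq A) h \<phi>"
  have h0: "h > 0" using h by simp
  have N0: "0 \<le> N" unfolding N_def
    by (rule S_norm_nonneg[OF inS]) (use ws_pos[OF ws] hat_pos[OF Ap] h0 in auto)
  have S0: "S0 \<phi>" by (rule in_S_S0[OF inS]) (use ws_pos[OF ws] hat_pos[OF Ap] h0 in auto)
  have Apos: "maxseq A p > 0" for p using maxseq_pos[of A p] Ap by blast
  have Tpos: "maxseq (tilde_seq M) p > 0" for p using maxseq_pos[of "tilde_seq M" p] tilde_pos[OF ws] by blast
  {
    case 0
    have "integral\<^sup>L lborel (\<lambda>x. \<bar>x\<bar>^j * norm (iter_deriv p (xpow 0 \<phi>) x))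
        \<le> 2 * N * h^(j+p+1) * hat_seq A p * tilde_seq M j"
      unfolding xpow_0 N_def by (rule J_base[OF ws Ap h inS])
    also have "\<dots> = (2 * N * h^(j+p+1) * fact p) * A p * tilde_seq M j"
      by (simp add: hat_seq_def mult_ac)
    also have "\<dots> \<le> (2 * N * h^(j+p+1) * fact p) * maxseq A p * maxseq (tilde_seq M) j"
      using N0 h0 Ap[of p] tilde_pos[OF ws, of j]
      by (intro mult_mono maxseq_ge order_refl) (auto intro!: mult_nonneg_nonneg less_imp_le[OF Apos])
    also have "\<dots> = 2 * N * h^(p+0+j+1) * fact p * 2^0 * maxseq A p * maxseq (tilde_seq M) (j+0)"
      by (simp add: add.commute)
    finally show ?case unfolding N_def .
  next
    case (Suc q)
    define X where "X = 2 * N * h^(p+q+j+2) * fact p * 2^q * maxseq A p * maxseq (tilde_seq M) (j+q+1)"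
    have X0: "0 \<le> X" unfolding X_def using N0 h0 Apos[of p] Tpos[of "j+q+1"] by simp
    have t1: "integral\<^sup>L lborel (\<lambda>x. \<bar>x\<bar>^(Suc j) * norm (iter_deriv p (xpow q \<phi>) x)) \<le> X"
    proof -
      have "integral\<^sup>L lborel (\<lambda>x. \<bar>x\<bar>^(Suc j) * norm (iter_deriv p (xpow q \<phi>) x))
        \<le> 2 * N * h^(p+q+Suc j+1) * fact p * 2^q * maxseq A p * maxseq (tilde_seq M) (Suc j+q)"
        unfolding N_def by (rule Suc.IH)
      also have "\<dots> = X" unfolding X_def by (simp add: add.commute add.left_commute)
      finally show ?thesis .
    qed
    have t2: "real p * integral\<^sup>L lborel (\<lambda>x. \<bar>x\<bar>^j * norm (iter_deriv (p - 1) (xpow q \<phi>) x)) \<le> X"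
    proof (cases p)
      case 0 then show ?thesis using X0 by simp
    next
      case (Suc p')
      have "real p * integral\<^sup>L lborel (\<lambda>x. \<bar>x\<bar>^j * norm (iter_deriv (p - 1) (xpow q \<phi>) x))
         \<le> real p * (2 * N * h^(p'+q+j+1) * fact p' * 2^q * maxseq A p' * maxseq (tilde_seq M) (j+q))"
        unfolding N_def using Suc.IH[of j p'] Suc by (intro mult_left_mono) auto
      also have "\<dots> = 2 * N * h^(p'+q+j+1) * (real p * fact p') * 2^q * maxseq A p' * maxseq (tilde_seq M) (j+q)"
        by (simp only: mult_ac)
      also have "\<dots> \<le> 2 * N * h^(p+q+j+2) * fact p * 2^q * maxseq A p * maxseq (tilde_seq M) (j+q+1)"
      proof -
        have f: "real p * fact p' = fact p" using Suc by simp
        have hh: "h^(p'+q+j+1) \<le> h^(p+q+j+2)" using h Suc by (intro power_increasing) auto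
        have am: "maxseq A p' \<le> maxseq A p" using Suc by (intro maxseq_mono) auto
        have tm: "maxseq (tilde_seq M) (j+q) \<le> maxseq (tilde_seq M) (j+q+1)" by (intro maxseq_mono) auto
        show ?thesis unfolding f
          using N0 h0 hh am tm Apos[of p'] Tpos[of "j+q"]
          by (intro mult_mono order_refl) (auto intro!: mult_nonneg_nonneg less_imp_le[OF Apos])
      qed
      finally show ?thesis unfolding X_def .
    qed
    have "integral\<^sup>L lborel (\<lambda>x. \<bar>x\<bar>^j * norm (iter_deriv p (xpow (Suc q) \<phi>) x))
       \<le> integral\<^sup>L lborel (\<lambda>x. \<bar>x\<bar>^(Suc j) * norm (iter_deriv p (xpow q \<phi>) x))
      + real p * integral\<^sup>L lborel (\<lambda>x. \<bar>x\<bar>^j * norm (iter_deriv (p - 1) (xpow q \<phi>) x))"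
      unfolding xpow_Suc by (rule J_step[OF S0_xpow[OF S0]])
    also have "\<dots> \<le> X + X" using t1 t2 by simp
    also have "\<dots> = 2 * N * h^(p+Suc q+j+1) * fact p * 2^(Suc q) * maxseq A p * maxseq (tilde_seq M) (j+Suc q)"
      unfolding X_def by (simp add: mult_ac)
    finally show ?case unfolding N_def .
  }
qed

lemma G_bound:
  assumes ws: "weight_sequence M" and Ap: "\<And>p. A p > 0" and h: "h \<ge> 1"
    and inS: "in_S M (hat_seq A) h \<phi>" and s: "\<bar>s\<bar> = 1"
  shows "\<bar>\<xi>\<bar>^p * norm (iter_deriv q (G s \<phi>) \<xi>)
     \<le> 2 * S_norm M (hat_seq A) h \<phi> * h^(p+q+0+1) * fact p * 2^q * maxseq A p * maxseq (tilde_seq M) (0+q)"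
proof -
  have h0: "h > 0" using h by simp
  have S0: "S0 \<phi>" by (rule in_S_S0[OF inS]) (use ws_pos[OF ws] hat_pos[OF Ap] h0 in auto)
  have "norm (iter_deriv q (G s \<phi>) \<xi>) = norm (G s (xpow q \<phi>) \<xi>)"
    unfolding G_iter[OF S0] using s by (simp add: norm_mult norm_power)
  then have "\<bar>\<xi>\<bar>^p * norm (iter_deriv q (G s \<phi>) \<xi>) = norm (G s (iter_deriv p (xpow q \<phi>)) \<xi>)"
    using G_xi_pow[OF S0_xpow[OF S0] s] by simp
  also have "\<dots> \<le> integral\<^sup>L lborel (\<lambda>x. \<bar>x\<bar>^0 * norm (iter_deriv p (xpow q \<phi>) x))"
    by (rule G_norm_le[OF S0_xpow[OF S0]])
  also have "\<dots> \<le> 2 * S_norm M (hat_seq A) h \<phi> * h^(p+q+0+1) * fact p * 2^q * maxseq A p * maxseq (tilde_seq M) (0+q)"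
    by (rule J_ind[OF ws Ap h inS])
  finally show ?thesis .
qed

lemma iter_deriv_cmult:
  assumes "smooth_fun f"
  shows "iter_deriv q (\<lambda>x. c * f x) = (\<lambda>x. c * iter_deriv q f x)"
  by (rule iter_deriv_seq[where g="\<lambda>n x. c * iter_deriv n f x"])
     (auto intro: has_vector_derivative_mult_right smooth_deriv[OF assms])

lemma smooth_cmult:
  assumes "smooth_fun f"
  shows "smooth_fun (\<lambda>x. c * f x)"
  by (rule iter_deriv_seq_smooth[where g="\<lambda>n x. c * iter_deriv n f x"])
     (auto intro: has_vector_derivative_mult_right smooth_deriv[OF assms])

lemma S_vals_E:
  assumes "v \<in> S_vals N B h \<phi>"
  obtains p q x where "v = norm (complex_of_real (x ^ p) * iter_deriv q \<phi> x) / (h ^ (p + q) * N p * B q)"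
  using assms unfolding S_vals_def mem_Collect_eq by blast

lemma S_vals_ne: "S_vals N B h \<phi> \<noteq> {}"
  by (auto simp: S_vals_def)

lemma in_S_mono:
  assumes "\<And>p. N p > 0" "\<And>q. B q > 0" "0 < h" "h \<le> h'" "in_S N B h \<phi>"
  shows "in_S N B h' \<phi>"
proof -
  have "v \<le> S_norm N B h \<phi>" if "v \<in> S_vals N B h' \<phi>" for v
  proof -
    from that obtain p q x where v: "v = norm (complex_of_real (x ^ p) * iter_deriv q \<phi> x) / (h' ^ (p + q) * N p * B q)"
      by (rule S_vals_E)
    have "h ^ (p + q) * N p * B q \<le> h' ^ (p + q) * N p * B q"
      using assms by (intro mult_right_mono power_mono) (auto intro: less_imp_le)
    then have "v \<le> norm (complex_of_real (x ^ p) * iter_deriv q \<phi> x) / (h ^ (p + q) * N p * B q)"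
      unfolding v using assms by (intro divide_left_mono) (auto intro!: mult_pos_pos)
    also have "\<dots> \<le> S_norm N B h \<phi>" by (rule in_S_val[OF assms(5)])
    finally show ?thesis .
  qed
  then have "bdd_above (S_vals N B h' \<phi>)" by (intro bdd_aboveI) blast
  then show ?thesis using assms(5) by (simp add: in_S_def)
qed

lemma num_bound:
  fixes N h D L aT tq mA mT :: real and A :: "nat \<Rightarrow> real"
  assumes N0: "0 \<le> N" and h: "h \<ge> 1" and D: "D > 0" and L: "L \<ge> 1" and aT: "aT > 0"
    and Ap: "A p > 0" and tp: "tq > 0"
    and mA: "mA \<le> D * L^p * A p" and mT: "mT \<le> aT * tq" and mA0: "0 \<le> mA" and mT0: "0 \<le> mT"
  shows "2 * N * h^(p+q+0+1) * fact p * 2^q * mA * mT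
     \<le> (2 * h * D * aT * N) * ((2 * L * h)^(p+q) * (fact p * A p) * tq)"
proof -
  have h0: "h > 0" using h by simp
  have "2 * N * h^(p+q+0+1) * fact p * 2^q * mA * mT
      \<le> 2 * N * h^(p+q+0+1) * fact p * 2^q * (D * L^p * A p) * (aT * tq)"
    using N0 h0 mA mT mA0 mT0 by (intro mult_mono order_refl) auto
  also have "\<dots> = (2 * h * D * aT * N) * ((h^(p+q) * (2^q * L^p)) * (fact p * A p) * tq)"
    by (simp only: add_0_right power_add power_one_right mult_ac)
  also have "\<dots> \<le> (2 * h * D * aT * N) * ((2 * L * h)^(p+q) * (fact p * A p) * tq)"
  proof -
    have "2^q * L^p \<le> (2::real)^p * 2^q * (L^p * L^q)"
    proof -
      have "(1::real) \<le> 2^p" by simp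
      moreover have "1 \<le> L^q" using L by simp
      ultimately have "1 * 1 \<le> (2::real)^p * L^q" by (intro mult_mono) auto
      then have "2^q * L^p * 1 \<le> 2^q * L^p * ((2::real)^p * L^q)" using L by (intro mult_left_mono) auto
      then show ?thesis by (simp only: mult_ac mult_1_right)
    qed
    also have "\<dots> = (2 * L)^(p+q)" by (simp only: power_add power_mult_distrib mult_ac)
    finally have "h^(p+q) * (2^q * L^p) \<le> h^(p+q) * (2 * L)^(p+q)" using h0 by (intro mult_left_mono) auto
    also have "\<dots> = (2 * L * h)^(p+q)" by (simp only: power_mult_distrib mult_ac)
    finally have k: "h^(p+q) * (2^q * L^p) \<le> (2 * L * h)^(p+q)" .
    show ?thesis using k N0 h0 D aT Ap tp
      by (intro mult_left_mono mult_right_mono) auto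
  qed
  finally show ?thesis .
qed

lemma op_main:
  assumes ws: "weight_sequence M" and ai: "almost_increasing (tilde_seq M)"
    and Ap: "\<And>p. A p > 0"
    and cond: "almost_increasing A \<or> (liminf (\<lambda>p. ereal (root p (A p))) > 0 \<and> alg_cond (hat_seq A))"
    and Top: "\<And>\<phi>. T \<phi> = (\<lambda>\<xi>. c * G s \<phi> \<xi>)" and c: "norm c \<le> 1" and s: "\<bar>s\<bar> = 1"
  shows "maps_continuously T M (hat_seq A) (hat_seq A) (tilde_seq M)"
proof -
  obtain aT where aT: "aT > 0" "\<And>q. maxseq (tilde_seq M) q \<le> aT * tilde_seq M q"
    using maxseq_ai[OF ai] by blast
  obtain D L where DL: "0 < D" "1 \<le> L" "\<And>p. maxseq A p \<le> D * L^p * A p"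
    using A_bound[OF Ap cond] by blast
  define a where "a = 2 * L"
  have a0: "a > 0" using DL by (simp add: a_def)
  have Mp: "\<And>p. M p > 0" using ws_pos[OF ws] .
  have Hp: "\<And>p. hat_seq A p > 0" using hat_pos[OF Ap] .
  have Tp: "\<And>p. tilde_seq M p > 0" using tilde_pos[OF ws] .
  have key: "in_S (hat_seq A) (tilde_seq M) (a * h) (T \<phi>) \<and>
      S_norm (hat_seq A) (tilde_seq M) (a * h) (T \<phi>) \<le> (2 * h * D * aT) * S_norm M (hat_seq A) h \<phi>"
    if h: "h \<ge> 1" and inS: "in_S M (hat_seq A) h \<phi>" for h \<phi>
  proof -
    define N where "N = S_norm M (hat_seq A) h \<phi>"
    have h0: "h > 0" using h by simp
    have N0: "0 \<le> N" unfolding N_def by (rule S_norm_nonneg[OF inS]) (use Mp Hp h0 in auto)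
    have S0: "S0 \<phi>" by (rule in_S_S0[OF inS Mp Hp h0])
    have smG: "smooth_fun (G s \<phi>)" by (rule G_smooth[OF S0])
    have TD: "iter_deriv q (T \<phi>) = (\<lambda>\<xi>. c * iter_deriv q (G s \<phi>) \<xi>)" for q
      unfolding Top by (rule iter_deriv_cmult[OF smG])
    have vb: "v \<le> (2 * h * D * aT) * N" if "v \<in> S_vals (hat_seq A) (tilde_seq M) (a * h) (T \<phi>)" for v
    proof -
      from that obtain p q \<xi> where v: "v = norm (complex_of_real (\<xi> ^ p) * iter_deriv q (T \<phi>) \<xi>) / ((a * h) ^ (p + q) * hat_seq A p * tilde_seq M q)"
        by (rule S_vals_E)
      have den: "(a * h) ^ (p + q) * hat_seq A p * tilde_seq M q > 0" using a0 h0 Hp Tp by simp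
      have "norm (complex_of_real (\<xi> ^ p) * iter_deriv q (T \<phi>) \<xi>) = \<bar>\<xi>\<bar>^p * (norm c * norm (iter_deriv q (G s \<phi>) \<xi>))"
        unfolding TD by (simp add: norm_mult norm_power power_abs)
      also have "\<dots> \<le> \<bar>\<xi>\<bar>^p * norm (iter_deriv q (G s \<phi>) \<xi>)"
        using c by (intro mult_left_mono mult_left_le_one_le) auto
      also have "\<dots> \<le> 2 * N * h^(p+q+0+1) * fact p * 2^q * maxseq A p * maxseq (tilde_seq M) (0+q)"
        unfolding N_def by (rule G_bound[OF ws Ap h inS s])
      also have "\<dots> \<le> (2 * h * D * aT * N) * ((2 * L * h)^(p+q) * (fact p * A p) * tilde_seq M q)"
        using N0 h DL aT Ap[of p] Tp[of q] maxseq_pos[of A p, OF Ap] maxseq_pos[of "tilde_seq M" q, OF Tp]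
        by (intro num_bound) (auto intro: less_imp_le)
      also have "\<dots> = (2 * h * D * aT * N) * ((a * h) ^ (p + q) * hat_seq A p * tilde_seq M q)"
        by (simp add: a_def hat_seq_def)
      finally show ?thesis unfolding v using den by (simp add: divide_le_eq mult.assoc)
    qed
    have inT: "in_S (hat_seq A) (tilde_seq M) (a * h) (T \<phi>)"
      unfolding in_S_def
    proof
      show "smooth_fun (T \<phi>)" unfolding Top by (rule smooth_cmult[OF smG])
      show "bdd_above (S_vals (hat_seq A) (tilde_seq M) (a * h) (T \<phi>))"
        using vb by (intro bdd_aboveI) blast
    qed
    have "S_norm (hat_seq A) (tilde_seq M) (a * h) (T \<phi>) \<le> (2 * h * D * aT) * N"
      unfolding S_norm_def by (rule cSup_least[OF S_vals_ne]) (rule vb)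
    then show ?thesis using inT unfolding N_def by simp
  qed
  show ?thesis
    unfolding maps_continuously_def
  proof (intro conjI allI impI)
    fix \<phi> assume "in_S_Roumieu M (hat_seq A) \<phi>"
    then obtain h where h: "h > 0" "in_S M (hat_seq A) h \<phi>" by (auto simp: in_S_Roumieu_def)
    define h' where "h' = max 1 h"
    have h': "h' \<ge> 1" "h \<le> h'" by (auto simp: h'_def)
    have "in_S M (hat_seq A) h' \<phi>" by (rule in_S_mono[OF Mp Hp h(1) h'(2) h(2)])
    then have "in_S (hat_seq A) (tilde_seq M) (a * h') (T \<phi>)" using key[OF h'(1)] by blast
    moreover have "a * h' > 0" using a0 h' by simp
    ultimately show "in_S_Roumieu (hat_seq A) (tilde_seq M) (T \<phi>)" by (auto simp: in_S_Roumieu_def)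
  next
    show "\<exists>a>0. \<forall>h\<ge>1. \<exists>C. \<forall>\<phi>. in_S M (hat_seq A) h \<phi> \<longrightarrow>
        in_S (hat_seq A) (tilde_seq M) (a * h) (T \<phi>) \<and>
        S_norm (hat_seq A) (tilde_seq M) (a * h) (T \<phi>) \<le> C * S_norm M (hat_seq A) h \<phi>"
      using key a0 by blast
  qed
qed

lemma fourier_G: "fourier \<phi> = (\<lambda>\<xi>. 1 * G 1 \<phi> \<xi>)"
  by (simp add: fun_eq_iff fourier_def G_def)

lemma inv_fourier_G: "inv_fourier \<phi> = (\<lambda>\<xi>. complex_of_real (1 / (2 * pi)) * G (-1) \<phi> \<xi>)"
proof
  fix \<xi>
  have e: "fourier \<phi> (- \<xi>) = G (-1) \<phi> \<xi>" unfolding fourier_def G_def by simp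
  have "inv_fourier \<phi> \<xi> = G (-1) \<phi> \<xi> / complex_of_real (2 * pi)" unfolding inv_fourier_def e ..
  also have "\<dots> = complex_of_real (1 / (2 * pi)) * G (-1) \<phi> \<xi>"
    by (simp only: of_real_divide of_real_1) simp
  finally show "inv_fourier \<phi> \<xi> = complex_of_real (1 / (2 * pi)) * G (-1) \<phi> \<xi>" .
qed

lemma norm_inv2pi: "norm (complex_of_real (1 / (2 * pi))) \<le> 1"
proof -
  have p: "1 / (2 * pi) > 0" using pi_gt_zero by simp
  have "1 / (2 * pi) \<le> 1" using pi_gt3 by (simp add: divide_le_eq)
  then show ?thesis using p by (simp only: norm_of_real abs_of_pos)
qed

theorem proposition4p2:
  fixes M A :: "nat \<Rightarrow> real"
  assumes "weight_sequence M"
    and "almost_increasing (tilde_seq M)"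
    and "\<forall>p. A p > 0"
    and "almost_increasing A \<or>
         (liminf (\<lambda>p. ereal (root p (A p))) > 0 \<and> alg_cond (hat_seq A))"
  shows "maps_continuously fourier M (hat_seq A) (hat_seq A) (tilde_seq M)
       \<and> maps_continuously inv_fourier M (hat_seq A) (hat_seq A) (tilde_seq M)"
proof
  have Ap: "\<And>p. A p > 0" using assms(3) by blast
  show "maps_continuously fourier M (hat_seq A) (hat_seq A) (tilde_seq M)"
    by (rule op_main[OF assms(1,2) Ap assms(4) fourier_G]) auto
  show "maps_continuously inv_fourier M (hat_seq A) (hat_seq A) (tilde_seq M)"
    by (rule op_main[OF assms(1,2) Ap assms(4) inv_fourier_G norm_inv2pi]) simp
qed

end
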